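(* Let $(X,\tau)$ be a compact space and $(Y,\sigma)$ a kd-space. Then every continuous function $f\colon (X,\tau)\to(Y,\sigma)$ is perfect and super-closed. Consequently every continuous bijection $f\colon X\to Y$ is a homeomorphism, and every super-continuous bijection $f\colon X\to Y$ is a super-homeomorphism.
   Context: A space is a kd-space if every compact subset is $\delta$-closed, where: $U$ is regular open if $U=\mathrm{Int}(\mathrm{Cl}(U))$; $x$ is a $\delta$-cluster point of $B$ if $B\cap U\ne\emptyset$ for every regular open $U\ni x$; $B$ is $\delta$-closed if it contains all its $\delta$-cluster points; complements of $\delta$-closed sets are $\delta$-open. A continuous map is perfect if it is closed and has compact fibers. A function $f$ is super-closed if the image of every closed subset of $X$ is $\delta$-closed in $Y$, and super-continuous if the preimage of every open subset of $Y$ is $\delta$-open in $X$. A bijection is a super-homeomorphism if it is both super-closed and super-continuous. *)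

theory Defs
  imports "HOL-Analysis.Analysis"
begin

definition regular_openin :: "'a topology \<Rightarrow> 'a set \<Rightarrow> bool" where
  "regular_openin X U \<longleftrightarrow> U = X interior_of (X closure_of U)"

definition delta_cluster_point :: "'a topology \<Rightarrow> 'a set \<Rightarrow> 'a \<Rightarrow> bool" where
  "delta_cluster_point X B x \<longleftrightarrow> x \<in> topspace X \<and>
     (\<forall>U. regular_openin X U \<and> x \<in> U \<longrightarrow> B \<inter> U \<noteq> {})"

definition delta_closedin :: "'a topology \<Rightarrow> 'a set \<Rightarrow> bool" where
  "delta_closedin X B \<longleftrightarrow> B \<subseteq> topspace X \<and> (\<forall>x. delta_cluster_point X B x \<longrightarrow> x \<in> B)"

definition delta_openin :: "'a topology \<Rightarrow> 'a set \<Rightarrow> bool" where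
  "delta_openin X U \<longleftrightarrow> U \<subseteq> topspace X \<and> delta_closedin X (topspace X - U)"

definition kd_space :: "'a topology \<Rightarrow> bool" where
  "kd_space X \<longleftrightarrow> (\<forall>K. compactin X K \<longrightarrow> delta_closedin X K)"

text \<open>Perfect map as in the paper: continuous, closed, with compact fibres (no surjectivity).\<close>
definition perfect_map_kd :: "'a topology \<Rightarrow> 'b topology \<Rightarrow> ('a \<Rightarrow> 'b) \<Rightarrow> bool" where
  "perfect_map_kd X Y f \<longleftrightarrow> continuous_map X Y f \<and> closed_map X Y f \<and>
     (\<forall>y \<in> topspace Y. compactin X {x \<in> topspace X. f x = y})"

definition super_closed :: "'a topology \<Rightarrow> 'b topology \<Rightarrow> ('a \<Rightarrow> 'b) \<Rightarrow> bool" where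
  "super_closed X Y f \<longleftrightarrow> (\<forall>C. closedin X C \<longrightarrow> delta_closedin Y (f ` C))"

definition super_continuous :: "'a topology \<Rightarrow> 'b topology \<Rightarrow> ('a \<Rightarrow> 'b) \<Rightarrow> bool" where
  "super_continuous X Y f \<longleftrightarrow> f \<in> topspace X \<rightarrow> topspace Y \<and>
     (\<forall>U. openin Y U \<longrightarrow> delta_openin X {x \<in> topspace X. f x \<in> U})"

definition super_homeomorphism :: "'a topology \<Rightarrow> 'b topology \<Rightarrow> ('a \<Rightarrow> 'b) \<Rightarrow> bool" where
  "super_homeomorphism X Y f \<longleftrightarrow> bij_betw f (topspace X) (topspace Y) \<and>
     super_closed X Y f \<and> super_continuous X Y f"

end

theory Submission
  imports Defs
begin

lemma delta_closed_imp_closed: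
  assumes "delta_closedin Y B" shows "closedin Y B"
proof -
  have sub: "B \<subseteq> topspace Y" using assms by (simp add: delta_closedin_def)
  have "\<exists>U. openin Y U \<and> x \<in> U \<and> U \<subseteq> topspace Y - B" if x: "x \<in> topspace Y - B" for x
  proof -
    have "\<not> delta_cluster_point Y B x" using assms x by (auto simp: delta_closedin_def)
    then obtain U where U: "regular_openin Y U" "x \<in> U" "B \<inter> U = {}"
      using x by (auto simp: delta_cluster_point_def)
    then have "openin Y U" unfolding regular_openin_def by (metis openin_interior_of)
    then show ?thesis using U openin_subset by blast
  qed
  then have "openin Y (topspace Y - B)" by (subst openin_subopen) blast
  then show ?thesis using sub by (simp add: closedin_def)
qed

lemma delta_open_imp_open:
  assumes "delta_openin X U" shows "openin X U"
  using assms delta_closed_imp_closed unfolding delta_openin_def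
  by (metis closedin_def double_diff order_refl)

lemma part1:
  assumes "compact_space X" "kd_space Y" "continuous_map X Y f"
  shows "perfect_map_kd X Y f \<and> super_closed X Y f"
proof -
  have sc: "super_closed X Y f"
    unfolding super_closed_def
    using assms closedin_compact_space image_compactin unfolding kd_space_def by blast
  then have cm: "closed_map X Y f"
    unfolding closed_map_def super_closed_def using delta_closed_imp_closed by blast
  have "compactin X {x \<in> topspace X. f x = y}" if y: "y \<in> topspace Y" for y
  proof -
    have "closedin Y {y}"
      using assms(2) y delta_closed_imp_closed compactin_sing unfolding kd_space_def by metis
    then have "closedin X {x \<in> topspace X. f x \<in> {y}}"
      using closedin_continuous_map_preimage assms(3) by blast
    then show ?thesis using closedin_compact_space assms(1) by simp
  qed
  then show ?thesis using sc cm assms(3) by (simp add: perfect_map_kd_def)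
qed

theorem mainTheorem7:
  fixes X :: "'a topology" and Y :: "'b topology"
  assumes "compact_space X" and "kd_space Y"
  shows "(\<forall>f. continuous_map X Y f \<longrightarrow> perfect_map_kd X Y f \<and> super_closed X Y f)
       \<and> (\<forall>f. continuous_map X Y f \<and> bij_betw f (topspace X) (topspace Y)
              \<longrightarrow> homeomorphic_map X Y f)
       \<and> (\<forall>f. super_continuous X Y f \<and> bij_betw f (topspace X) (topspace Y)
              \<longrightarrow> super_homeomorphism X Y f)"
proof (intro conjI)
  show "\<forall>f. continuous_map X Y f \<longrightarrow> perfect_map_kd X Y f \<and> super_closed X Y f"
    using part1 assms by blast
next
  show "\<forall>f. continuous_map X Y f \<and> bij_betw f (topspace X) (topspace Y)
              \<longrightarrow> homeomorphic_map X Y f"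
  proof (intro allI impI)
  fix f assume a: "continuous_map X Y f \<and> bij_betw f (topspace X) (topspace Y)"
  then have "closed_map X Y f" using part1[OF assms] unfolding perfect_map_kd_def by blast
  then show "homeomorphic_map X Y f" using a bijective_closed_imp_homeomorphic_map
    by (metis bij_betw_def)
  qed
next
  show "\<forall>f. super_continuous X Y f \<and> bij_betw f (topspace X) (topspace Y)
              \<longrightarrow> super_homeomorphism X Y f"
  proof (intro allI impI)
  fix f assume a: "super_continuous X Y f \<and> bij_betw f (topspace X) (topspace Y)"
  then have "continuous_map X Y f"
    unfolding continuous_map_def super_continuous_def using delta_open_imp_open by blast
  then have "super_closed X Y f" using part1 assms by blast
  then show "super_homeomorphism X Y f" using a by (simp add: super_homeomorphism_def)
  qed
qed

end
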